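(* Let $d\ge 1$, $R>0$ and $\sigma_1,\sigma_2>0$. Define $t_1:\mathbb{R}^d\to\mathbb{R}^d$ by $t_1(\boldsymbol x)=\boldsymbol x$ and $t_2:\mathbb{R}^d\to\mathbb{R}^{d_2}$ by $$t_2(\boldsymbol x)=\big(x_1^2,\ldots,x_d^2,\ \sqrt2\,x_1x_2,\ \ldots,\ \sqrt2\,x_{d-1}x_d\big)^T,$$ i.e. the vector whose entries are $x_i^2$ for $1\le i\le d$ and $\sqrt2\,x_ix_j$ for $1\le i<j\le d$, with $d_2 = d(d+1)/2$ its number of entries. For a record $(\boldsymbol x,y)$ with $\boldsymbol x\in\mathbb{R}^d$, $\|\boldsymbol x\|_2\le R$ and $y\in\{-1,1\}$, consider the mechanism $$\mathcal M(\boldsymbol x,y)=\begin{bmatrix} y\,t_1(\boldsymbol x)\\ t_2(\boldsymbol x)\end{bmatrix}+\mathcal N\!\left(0,\begin{bmatrix}\sigma_1^2 I_d & 0\\ 0 & \sigma_2^2 I_{d_2}\end{bmatrix}\right).$$ Then the tight $(\epsilon,\delta)$-DP guarantee for $\mathcal M$ (with respect to replacing a record $(\boldsymbol x,y)$ by another record $(\boldsymbol x',y')$ satisfying the same constraints) is obtained by considering a Gaussian mechanism with noise variance $\sigma_1^2$ and $L_2$-sensitivity $$\Delta=\sqrt{\frac{\sigma_2^2}{2\sigma_1^2}+2R^2+2\frac{\sigma_1^2}{\sigma_2^2}R^4};$$ that is, for $\epsilon\ge 0$, $\delta\in[0,1]$, $\mathcal M$ is $(\epsilon,\delta)$-DP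 whenever $\Phi\!\left(\frac{\Delta}{2\sigma_1}-\frac{\epsilon\sigma_1}{\Delta}\right)-e^{\epsilon}\Phi\!\left(-\frac{\Delta}{2\sigma_1}-\frac{\epsilon\sigma_1}{\Delta}\right)\le\delta$.
   Context: A randomized mechanism $\mathcal M$ is $(\epsilon,\delta)$-differentially private if for all neighbouring inputs $D\sim D'$ (here: inputs differing by replacement of one record) and all measurable output sets $O$, $\Pr[\mathcal M(D)\in O]\le e^{\epsilon}\Pr[\mathcal M(D')\in O]+\delta$. The $L_2$-sensitivity of a function $t$ is $\max_{D\sim D'}\|t(D)-t(D')\|_2$. The Gaussian mechanism $t(D)+\mathcal N(0,\sigma^2 I)$ with $L_2$-sensitivity $\Delta$ is $(\epsilon,\delta)$-DP iff $\Phi(\frac{\Delta}{2\sigma}-\frac{\epsilon\sigma}{\Delta})-e^{\epsilon}\Phi(-\frac{\Delta}{2\sigma}-\frac{\epsilon\sigma}{\Delta})\le\delta$, where $\Phi$ is the standard normal CDF. This lemma arises in logistic regression, where labels satisfy $y\in\{-1,1\}$. *)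

theory Defs
  imports "HOL-Probability.Probability"
begin

definition Phi :: "real \<Rightarrow> real" where
  "Phi t = measure (density lborel std_normal_density) {..t}"

definition is_dp :: "('a \<Rightarrow> 'b measure) \<Rightarrow> ('a \<Rightarrow> 'a \<Rightarrow> bool) \<Rightarrow> real \<Rightarrow> real \<Rightarrow> bool" where
  "is_dp M nb \<epsilon> \<delta> \<longleftrightarrow>
     (\<forall>D D'. nb D D' \<longrightarrow>
        (\<forall>S \<in> sets (M D). measure (M D) S \<le> exp \<epsilon> * measure (M D') S + \<delta>))"

text \<open>Output coordinates: Inl i (i < d) for y * x_i; Inr (i,j) (i \<le> j < d) for
  the entries of t_2(x): x_i^2 if i = j and sqrt 2 * x_i * x_j if i < j.\<close>
definition out_idx :: "nat \<Rightarrow> (nat + nat \<times> nat) set" where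
  "out_idx d = Inl ` {..<d} \<union> Inr ` {(i, j). i \<le> j \<and> j < d}"

definition t2 :: "(nat \<Rightarrow> real) \<Rightarrow> nat \<times> nat \<Rightarrow> real" where
  "t2 x = (\<lambda>(i, j). if i = j then (x i)\<^sup>2 else sqrt 2 * x i * x j)"

definition mech_mean :: "(nat \<Rightarrow> real) \<times> real \<Rightarrow> nat + nat \<times> nat \<Rightarrow> real" where
  "mech_mean r k = (case k of Inl i \<Rightarrow> snd r * fst r i | Inr p \<Rightarrow> t2 (fst r) p)"

definition mech :: "nat \<Rightarrow> real \<Rightarrow> real \<Rightarrow> (nat \<Rightarrow> real) \<times> real \<Rightarrow> (nat + nat \<times> nat \<Rightarrow> real) measure" where
  "mech d \<sigma>1 \<sigma>2 r = PiM (out_idx d) (\<lambda>k. density lborel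
      (normal_density (mech_mean r k) (case k of Inl _ \<Rightarrow> \<sigma>1 | Inr _ \<Rightarrow> \<sigma>2)))"

definition valid_record :: "nat \<Rightarrow> real \<Rightarrow> (nat \<Rightarrow> real) \<times> real \<Rightarrow> bool" where
  "valid_record d R r \<longleftrightarrow> sqrt (\<Sum>i<d. (fst r i)\<^sup>2) \<le> R \<and> snd r \<in> {-1, 1}"

end

theory Submission
  imports Defs
begin


lemma indicator_PiE_prod:
  "x \<in> extensional I \<Longrightarrow> finite I \<Longrightarrow> (indicator (Pi\<^sub>E I A) x :: ennreal) = (\<Prod>k\<in>I. indicator (A k) (x k))"
proof (cases "x \<in> Pi\<^sub>E I A")
  case True then show ?thesis by (simp add: PiE_iff indicator_def)
next
  case False
  assume "x \<in> extensional I" "finite I"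
  with False obtain k where "k \<in> I" "x k \<notin> A k" by (auto simp: PiE_iff)
  then show ?thesis using False \<open>finite I\<close> by (subst prod_zero) (auto simp: indicator_def)
qed

lemma PiM_density_normal:
  fixes I :: "'i set"
  assumes I: "finite I" and s: "\<And>k. k \<in> I \<Longrightarrow> s k > 0"
  shows "PiM I (\<lambda>k. density lborel (normal_density (\<mu> k) (s k)))
       = density (PiM I (\<lambda>_. lborel)) (\<lambda>x. \<Prod>k\<in>I. ennreal (normal_density (\<mu> k) (s k) (x k)))"
proof -
  define N where "N = (\<lambda>k. density lborel (\<lambda>x. ennreal (normal_density (\<mu> k) (if k \<in> I then s k else 1) x)))"
  have NI: "PiM I (\<lambda>k. density lborel (normal_density (\<mu> k) (s k))) = PiM I N"
    by (intro PiM_cong) (auto simp: N_def)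
  have pN: "prob_space (N k)" for k
    unfolding N_def using s by (intro prob_space_normal_density) auto
  interpret product_prob_space N I
    by (simp add: product_prob_space_def product_sigma_finite_def pN prob_space_imp_sigma_finite product_prob_space_axioms_def)
  interpret L: product_sigma_finite "\<lambda>_. lborel"
    by (simp add: product_sigma_finite_def lborel.sigma_finite_measure_axioms)
  have "density (PiM I (\<lambda>_. lborel)) (\<lambda>x. \<Prod>k\<in>I. ennreal (normal_density (\<mu> k) (s k) (x k))) = PiM I N"
  proof (rule PiM_eqI[OF I])
    show "sets (density (PiM I (\<lambda>_. lborel)) (\<lambda>x. \<Prod>k\<in>I. ennreal (normal_density (\<mu> k) (s k) (x k)))) = sets (PiM I N)"
      by (simp add: N_def cong: sets_PiM_cong)
  next
    fix A assume A: "\<And>i. i \<in> I \<Longrightarrow> A i \<in> sets (N i)"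
    have Ab: "A i \<in> sets lborel" if "i \<in> I" for i using A[OF that] by (simp add: N_def)
    have "emeasure (density (PiM I (\<lambda>_. lborel)) (\<lambda>x. \<Prod>k\<in>I. ennreal (normal_density (\<mu> k) (s k) (x k)))) (Pi\<^sub>E I A)
       = (\<integral>\<^sup>+ x. (\<Prod>k\<in>I. ennreal (normal_density (\<mu> k) (s k) (x k))) * indicator (Pi\<^sub>E I A) x \<partial>PiM I (\<lambda>_. lborel))"
      using Ab by (subst emeasure_density) (auto intro!: sets_PiM_I_finite I)
    also have "\<dots> = (\<integral>\<^sup>+ x. (\<Prod>k\<in>I. ennreal (normal_density (\<mu> k) (s k) (x k)) * indicator (A k) (x k)) \<partial>PiM I (\<lambda>_. lborel))"
      by (intro nn_integral_cong) (simp add: space_PiM indicator_PiE_prod I prod.distrib PiE_iff)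
    also have "\<dots> = (\<Prod>k\<in>I. (\<integral>\<^sup>+ y. ennreal (normal_density (\<mu> k) (s k) y) * indicator (A k) y \<partial>lborel))"
      using Ab by (intro L.product_nn_integral_prod I) auto
    also have "\<dots> = (\<Prod>k\<in>I. emeasure (N k) (A k))"
      using Ab s by (intro prod.cong refl) (simp add: N_def emeasure_density)
    finally show "emeasure (density (PiM I (\<lambda>_. lborel)) (\<lambda>x. \<Prod>k\<in>I. ennreal (normal_density (\<mu> k) (s k) (x k)))) (Pi\<^sub>E I A) = (\<Prod>k\<in>I. emeasure (N k) (A k))" .
  qed
  with NI show ?thesis by simp
qed



definition gm :: "'i set \<Rightarrow> ('i \<Rightarrow> real) \<Rightarrow> ('i \<Rightarrow> real) \<Rightarrow> ('i \<Rightarrow> real) measure" where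
  "gm I \<mu> s = PiM I (\<lambda>k. density lborel (\<lambda>x. ennreal (normal_density (\<mu> k) (s k) x)))"

lemma prob_space_gm: "(\<And>k. k \<in> I \<Longrightarrow> s k > 0) \<Longrightarrow> prob_space (gm I \<mu> s)"
  unfolding gm_def by (intro prob_space_PiM prob_space_normal_density) auto

lemma sets_gm: "sets (gm I \<mu> s) = sets (PiM I (\<lambda>_. borel))"
  unfolding gm_def by (rule sets_PiM_cong) simp_all

lemma space_gm: "space (gm I \<mu> s) = space (PiM I (\<lambda>_. borel))"
  by (rule sets_eq_imp_space_eq[OF sets_gm])

lemma gm_coord:
  assumes "k \<in> I" and s: "\<And>k. k \<in> I \<Longrightarrow> s k > 0"
  shows "distributed (gm I \<mu> s) lborel (\<lambda>x. x k) (\<lambda>y. ennreal (normal_density (\<mu> k) (s k) y))"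
proof -
  have "distr (gm I \<mu> s) lborel (\<lambda>x. x k) = distr (gm I \<mu> s) (density lborel (\<lambda>x. ennreal (normal_density (\<mu> k) (s k) x))) (\<lambda>x. x k)"
    by (intro distr_cong) auto
  also have "\<dots> = density lborel (\<lambda>x. ennreal (normal_density (\<mu> k) (s k) x))"
    unfolding gm_def using assms by (intro distr_PiM_component prob_space_normal_density) auto
  finally show ?thesis unfolding distributed_def
    by (auto simp: gm_def measurable_component_singleton assms)
qed

lemma gm_indep:
  assumes Ine: "I \<noteq> {}" and s: "\<And>k. k \<in> I \<Longrightarrow> s k > 0"
  shows "prob_space.indep_vars (gm I \<mu> s) (\<lambda>_. borel) (\<lambda>k x. x k) I"
proof -
  interpret prob_space "gm I \<mu> s" by (rule prob_space_gm) (rule s)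
  have rv: "random_variable borel (\<lambda>x. x k)" if "k \<in> I" for k
    using that by (simp add: gm_def measurable_component_singleton)
  have "distr (gm I \<mu> s) (PiM I (\<lambda>_. borel)) (\<lambda>x. \<lambda>i\<in>I. x i) = distr (gm I \<mu> s) (gm I \<mu> s) (\<lambda>x. x)"
    by (intro distr_cong) (auto simp: sets_gm space_gm space_PiM PiE_def extensional_def restrict_def)
  also have "\<dots> = gm I \<mu> s" by simp
  also have "\<dots> = PiM I (\<lambda>i. distr (gm I \<mu> s) borel (\<lambda>x. x i))"
    unfolding gm_def
  proof (intro PiM_cong refl)
    fix i assume i: "i \<in> I"
    have "distr (gm I \<mu> s) borel (\<lambda>x. x i) = distr (gm I \<mu> s) (density lborel (\<lambda>x. ennreal (normal_density (\<mu> i) (s i) x))) (\<lambda>x. x i)"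
      by (intro distr_cong) auto
    also have "\<dots> = density lborel (\<lambda>x. ennreal (normal_density (\<mu> i) (s i) x))"
      unfolding gm_def using i s by (intro distr_PiM_component prob_space_normal_density) auto
    finally show "density lborel (\<lambda>x. ennreal (normal_density (\<mu> i) (s i) x)) = distr (Pi\<^sub>M I (\<lambda>k. density lborel (\<lambda>x. ennreal (normal_density (\<mu> k) (s k) x)))) borel (\<lambda>x. x i)"
      by (simp add: gm_def)
  qed
  finally show ?thesis
    using indep_vars_iff_distr_eq_PiM'[OF Ine rv] by simp
qed

lemma gm_lin:
  assumes I: "finite I" and s: "\<And>k. k \<in> I \<Longrightarrow> s k > 0"
    and J: "J \<subseteq> I" "J \<noteq> {}" and a: "\<And>k. k \<in> J \<Longrightarrow> a k \<noteq> 0"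
  shows "distributed (gm I \<mu> s) lborel (\<lambda>x. \<Sum>k\<in>J. a k * x k)
           (\<lambda>y. ennreal (normal_density (\<Sum>k\<in>J. a k * \<mu> k) (sqrt (\<Sum>k\<in>J. (a k * s k)^2)) y))"
proof -
  interpret prob_space "gm I \<mu> s" by (rule prob_space_gm) (rule s)
  have fin: "finite J" using J I finite_subset by blast
  have ind: "indep_vars (\<lambda>_. borel) (\<lambda>k x. a k * x k) I"
    using indep_vars_compose2[OF gm_indep[of I s \<mu>], of "\<lambda>k y. a k * y" "\<lambda>_. borel"] J s by auto
  from fin J(2) J(1) a show ?thesis
  proof (induction J rule: finite_ne_induct)
    case (singleton k)
    then have k: "k \<in> I" "a k \<noteq> 0" by auto
    have "distributed (gm I \<mu> s) lborel (\<lambda>x. 0 + a k * x k) (normal_density (0 + a k * \<mu> k) (\<bar>a k\<bar> * s k))"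
      by (rule normal_density_affine[OF gm_coord[OF k(1) s]]) (use s k in auto)
    moreover have "sqrt ((a k * s k)^2) = \<bar>a k\<bar> * s k" using s[OF k(1)] by (simp add: abs_mult)
    ultimately show ?case by simp
  next
    case (insert k F)
    then have k: "k \<in> I" "a k \<noteq> 0" and FI: "F \<subseteq> I" by auto
    have IH: "distributed (gm I \<mu> s) lborel (\<lambda>x. \<Sum>k\<in>F. a k * x k)
           (\<lambda>y. ennreal (normal_density (\<Sum>k\<in>F. a k * \<mu> k) (sqrt (\<Sum>k\<in>F. (a k * s k)^2)) y))"
      using insert by auto
    have X: "distributed (gm I \<mu> s) lborel (\<lambda>x. 0 + a k * x k) (normal_density (0 + a k * \<mu> k) (\<bar>a k\<bar> * s k))"
      by (rule normal_density_affine[OF gm_coord[OF k(1) s]]) (use s k in auto)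
    have indk: "indep_var borel (\<lambda>x. a k * x k) borel (\<lambda>x. \<Sum>k\<in>F. a k * x k)"
      using indep_vars_sum[OF insert.hyps(1,3) indep_vars_subset[OF ind]] insert by auto
    have pos1: "0 < \<bar>a k\<bar> * s k" using s k by auto
    have Fpos: "0 < (\<Sum>k\<in>F. (a k * s k)^2)"
    proof (rule sum_pos)
      fix j assume "j \<in> F"
      then have "j \<in> I" "a j \<noteq> 0" using FI insert.prems by auto
      then show "0 < (a j * s j)^2" using s[of j] by simp
    qed (use insert.hyps in auto)
    have "distributed (gm I \<mu> s) lborel (\<lambda>x. a k * x k + (\<Sum>k\<in>F. a k * x k))
        (normal_density (a k * \<mu> k + (\<Sum>k\<in>F. a k * \<mu> k)) (sqrt ((\<bar>a k\<bar> * s k)\<^sup>2 + (sqrt (\<Sum>k\<in>F. (a k * s k)^2))\<^sup>2)))"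
      by (rule add_indep_normal[OF indk pos1 _ _ IH]) (use X Fpos in auto)
    moreover have "(\<bar>a k\<bar> * s k)\<^sup>2 + (sqrt (\<Sum>k\<in>F. (a k * s k)^2))\<^sup>2 = (\<Sum>k\<in>insert k F. (a k * s k)^2)"
      using Fpos insert.hyps by (simp add: power_mult_distrib)
    ultimately show ?case using insert.hyps by simp
  qed
qed



lemma Phi_distributed:
  assumes M: "prob_space M" and V: "distributed M lborel V (\<lambda>x. ennreal (std_normal_density x))"
  shows "measure M {x \<in> space M. V x < t} = Phi t"
proof -
  interpret prob_space M by fact
  have "emeasure M {x \<in> space M. V x < t} = emeasure M (V -` {..<t} \<inter> space M)"
    by (intro arg_cong[where f="emeasure M"]) auto
  also have "\<dots> = (\<integral>\<^sup>+x. ennreal (std_normal_density x) * indicator {..<t} x \<partial>lborel)"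
    by (rule distributed_emeasure[OF V]) simp
  also have "\<dots> = (\<integral>\<^sup>+x. ennreal (std_normal_density x) * indicator {..t} x \<partial>lborel)"
    by (intro nn_integral_cong_AE) (use AE_lborel_singleton[of t] in \<open>auto elim!: eventually_mono simp: indicator_def\<close>)
  also have "\<dots> = emeasure (density lborel std_normal_density) {..t}"
    by (subst emeasure_density) auto
  finally have "measure M {x \<in> space M. V x < t} = measure (density lborel std_normal_density) {..t}"
    by (simp add: measure_def)
  then show ?thesis by (simp add: Phi_def)
qed

lemma normal_tail:
  assumes M: "prob_space M" and \<sigma>: "\<sigma> > 0"
    and Z: "distributed M lborel Z (\<lambda>x. ennreal (normal_density m \<sigma> x))"
  shows "measure M {x \<in> space M. b < Z x} = Phi ((m - b) / \<sigma>)"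
proof -
  interpret prob_space M by fact
  have "distributed M lborel (\<lambda>x. m / \<sigma> + (- 1 / \<sigma>) * Z x) (normal_density (m / \<sigma> + (- 1 / \<sigma>) * m) (\<bar>- 1 / \<sigma>\<bar> * \<sigma>))"
    by (rule normal_density_affine[OF Z \<sigma>]) (use \<sigma> in auto)
  then have V: "distributed M lborel (\<lambda>x. m / \<sigma> + (- 1 / \<sigma>) * Z x) (\<lambda>x. ennreal (std_normal_density x))"
    using \<sigma> by simp
  have "{x \<in> space M. b < Z x} = {x \<in> space M. m / \<sigma> + (- 1 / \<sigma>) * Z x < (m - b) / \<sigma>}"
    using \<sigma> by (auto simp: field_simps)
  then show ?thesis using Phi_distributed[OF M V] by simp
qed



lemma gm_halfspace:
  assumes I: "finite I" and s: "\<And>k. k \<in> I \<Longrightarrow> s k > 0"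
    and V: "(\<Sum>k\<in>I. (a k * s k)^2) > 0"
  shows "measure (gm I \<mu> s) {x \<in> space (gm I \<mu> s). b < (\<Sum>k\<in>I. a k * x k)}
       = Phi (((\<Sum>k\<in>I. a k * \<mu> k) - b) / sqrt (\<Sum>k\<in>I. (a k * s k)^2))"
proof -
  define J where "J = {k \<in> I. a k \<noteq> 0}"
  have JI: "J \<subseteq> I" by (auto simp: J_def)
  have Jne: "J \<noteq> {}"
  proof
    assume "J = {}"
    then have "\<forall>k\<in>I. a k = 0" by (auto simp: J_def)
    then have "(\<Sum>k\<in>I. (a k * s k)^2) = 0" by simp
    with V show False by simp
  qed
  have eq: "(\<Sum>k\<in>I. f k) = (\<Sum>k\<in>J. f k)" if "\<And>k. a k = 0 \<Longrightarrow> f k = 0" for f :: "_ \<Rightarrow> real"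
    by (rule sum.mono_neutral_right[OF I JI]) (auto simp: J_def that)
  have D: "distributed (gm I \<mu> s) lborel (\<lambda>x. \<Sum>k\<in>J. a k * x k)
           (\<lambda>y. ennreal (normal_density (\<Sum>k\<in>J. a k * \<mu> k) (sqrt (\<Sum>k\<in>J. (a k * s k)^2)) y))"
    by (rule gm_lin[OF I s JI Jne]) (auto simp: J_def)
  have V': "sqrt (\<Sum>k\<in>J. (a k * s k)^2) > 0"
    using V eq[of "\<lambda>k. (a k * s k)^2"] by simp
  have "measure (gm I \<mu> s) {x \<in> space (gm I \<mu> s). b < (\<Sum>k\<in>J. a k * x k)}
     = Phi (((\<Sum>k\<in>J. a k * \<mu> k) - b) / sqrt (\<Sum>k\<in>J. (a k * s k)^2))"
    by (rule normal_tail[OF prob_space_gm V' D]) (use s in auto)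
  moreover have "(\<Sum>k\<in>I. a k * x k) = (\<Sum>k\<in>J. a k * x k)" for x
    by (rule eq) simp
  moreover have "(\<Sum>k\<in>I. a k * \<mu> k) = (\<Sum>k\<in>J. a k * \<mu> k)"
    by (rule eq) simp
  moreover have "(\<Sum>k\<in>I. (a k * s k)^2) = (\<Sum>k\<in>J. (a k * s k)^2)"
    by (rule eq) simp
  ultimately show ?thesis by simp
qed



lemma dens_cmp:
  assumes P: "P = density L (\<lambda>x. ennreal (p x))" and Q: "Q = density L (\<lambda>x. ennreal (q x))"
    and pm: "p \<in> borel_measurable L" and qm: "q \<in> borel_measurable L"
    and pP: "prob_space P" and pQ: "prob_space Q"
    and B: "B \<in> sets L" and c1: "c1 \<ge> 0" and c2: "c2 \<ge> 0"
    and le: "\<And>x. x \<in> B \<Longrightarrow> c1 * p x \<le> c2 * q x"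
    and p0: "\<And>x. p x \<ge> 0" and q0: "\<And>x. q x \<ge> 0"
  shows "c1 * measure P B \<le> c2 * measure Q B"
proof -
  have "ennreal c1 * emeasure P B = (\<integral>\<^sup>+x. ennreal c1 * (ennreal (p x) * indicator B x) \<partial>L)"
    unfolding P using B pm by (subst emeasure_density) (auto simp: nn_integral_cmult)
  also have "\<dots> \<le> (\<integral>\<^sup>+x. ennreal c2 * (ennreal (q x) * indicator B x) \<partial>L)"
  proof (intro nn_integral_mono)
    fix x
    show "ennreal c1 * (ennreal (p x) * indicator B x) \<le> ennreal c2 * (ennreal (q x) * indicator B x)"
      using le[of x] c1 c2 p0[of x] q0[of x]
      by (cases "x \<in> B") (auto simp: ennreal_mult[symmetric] ennreal_leI)
  qed
  also have "\<dots> = ennreal c2 * emeasure Q B"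
    unfolding Q using B qm by (subst emeasure_density) (auto simp: nn_integral_cmult)
  finally have "ennreal c1 * emeasure P B \<le> ennreal c2 * emeasure Q B" .
  interpret PP: prob_space P by fact
  interpret QQ: prob_space Q by fact
  from \<open>ennreal c1 * emeasure P B \<le> ennreal c2 * emeasure Q B\<close>
  have "ennreal (c1 * measure P B) \<le> ennreal (c2 * measure Q B)"
    using PP.emeasure_eq_measure QQ.emeasure_eq_measure c1 c2
    by (simp add: ennreal_mult)
  then show ?thesis using c2 by (simp add: ennreal_le_iff)
qed

lemma nd_ratio:
  assumes "s > 0"
  shows "normal_density \<mu> s y = normal_density \<nu> s y * exp ((\<mu> - \<nu>) / s^2 * y + (\<nu>^2 - \<mu>^2) / (2 * s^2))"
proof -
  have 1: "-(y - \<mu>)\<^sup>2 / (2 * s\<^sup>2) = -(y - \<nu>)\<^sup>2 / (2 * s\<^sup>2) + ((\<mu> - \<nu>) / s^2 * y + (\<nu>^2 - \<mu>^2) / (2 * s^2))"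
    using assms by (simp add: field_simps power2_eq_square)
  have e: "exp (-(y - \<mu>)\<^sup>2 / (2 * s\<^sup>2)) = exp (-(y - \<nu>)\<^sup>2 / (2 * s\<^sup>2)) * exp ((\<mu> - \<nu>) / s^2 * y + (\<nu>^2 - \<mu>^2) / (2 * s^2))"
    by (subst 1) (rule exp_add)
  show ?thesis unfolding normal_density_def by (simp only: e mult.assoc)
qed

lemma mean_term:
  fixes \<mu> \<nu> s :: real
  assumes "s > 0"
  shows "(\<mu> - \<nu>) / s^2 * \<mu> + (\<nu>^2 - \<mu>^2) / (2 * s^2) = ((\<mu> - \<nu>) / s)^2 / 2"
    and "(\<mu> - \<nu>) / s^2 * \<nu> + (\<nu>^2 - \<mu>^2) / (2 * s^2) = - (((\<mu> - \<nu>) / s)^2 / 2)"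
    and "((\<mu> - \<nu>) / s^2 * s)^2 = ((\<mu> - \<nu>) / s)^2"
  using assms by (simp_all add: field_simps power2_eq_square)



lemma (in finite_measure) split_meas:
  assumes "X \<in> sets M" "Y \<in> sets M"
  shows "measure M X = measure M (X \<inter> Y) + measure M (X - Y)"
proof -
  have eq: "(X \<inter> Y) \<union> (X - Y) = X" by blast
  have "measure M X = measure M ((X \<inter> Y) \<union> (X - Y))" by (simp only: eq)
  also have "\<dots> = measure M (X \<inter> Y) + measure M (X - Y)"
    by (rule finite_measure_Union) (use assms in auto)
  finally show ?thesis .
qed

lemma hockey:
  fixes I :: "'i set"
  assumes I: "finite I" and s: "\<And>k. k \<in> I \<Longrightarrow> s k > 0"
    and Ddef: "D = sqrt (\<Sum>k\<in>I. ((\<mu> k - \<nu> k) / s k)^2)" and Dpos: "D > 0"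
    and S: "S \<in> sets (gm I \<mu> s)"
  shows "measure (gm I \<mu> s) S - exp \<epsilon> * measure (gm I \<nu> s) S
         \<le> Phi (D / 2 - \<epsilon> / D) - exp \<epsilon> * Phi (- D / 2 - \<epsilon> / D)"
proof -
  define L where "L = PiM I (\<lambda>_. lborel :: real measure)"
  define P where "P = gm I \<mu> s"
  define Q where "Q = gm I \<nu> s"
  define p where "p = (\<lambda>x. \<Prod>k\<in>I. normal_density (\<mu> k) (s k) (x k))"
  define q where "q = (\<lambda>x. \<Prod>k\<in>I. normal_density (\<nu> k) (s k) (x k))"
  define a where "a = (\<lambda>k. (\<mu> k - \<nu> k) / (s k)^2)"
  define c where "c = (\<Sum>k\<in>I. ((\<nu> k)^2 - (\<mu> k)^2) / (2 * (s k)^2))"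
  define Lf where "Lf = (\<lambda>x. (\<Sum>k\<in>I. a k * x k) + c)"
  define D2 where "D2 = (\<Sum>k\<in>I. ((\<mu> k - \<nu> k) / s k)^2)"
  have D2: "D2 = D^2" "D2 > 0" using Ddef Dpos D2_def by (auto simp: sum_nonneg)
  have pP: "prob_space P" "prob_space Q" unfolding P_def Q_def using s by (auto intro: prob_space_gm)
  have p0: "p x \<ge> 0" "q x \<ge> 0" for x unfolding p_def q_def by (auto intro!: prod_nonneg normal_density_nonneg)
  have Pd: "P = density L (\<lambda>x. ennreal (p x))"
    unfolding P_def gm_def L_def p_def using PiM_density_normal[OF I s, where \<mu>=\<mu>]
    by (simp add: prod_ennreal normal_density_nonneg)
  have Qd: "Q = density L (\<lambda>x. ennreal (q x))"
    unfolding Q_def gm_def L_def q_def using PiM_density_normal[OF I s, where \<mu>=\<nu>]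
    by (simp add: prod_ennreal normal_density_nonneg)
  have pm: "p \<in> borel_measurable L" "q \<in> borel_measurable L"
    unfolding p_def q_def L_def normal_density_def by measurable
  have Lfm: "Lf \<in> borel_measurable L"
    unfolding Lf_def L_def by measurable
  have setsL: "sets P = sets L" "sets Q = sets L"
    unfolding P_def Q_def L_def gm_def by (auto intro!: sets_PiM_cong)
  have spL: "space P = space L" "space Q = space L"
    using setsL sets_eq_imp_space_eq by blast+
  have pq: "p x = q x * exp (Lf x)" for x
  proof -
    have "p x = (\<Prod>k\<in>I. normal_density (\<nu> k) (s k) (x k) * exp (a k * x k + ((\<nu> k)^2 - (\<mu> k)^2) / (2 * (s k)^2)))"
      unfolding p_def a_def by (intro prod.cong refl nd_ratio s)
    also have "\<dots> = q x * exp (\<Sum>k\<in>I. a k * x k + ((\<nu> k)^2 - (\<mu> k)^2) / (2 * (s k)^2))"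
      unfolding q_def by (simp add: prod.distrib exp_sum I)
    also have "(\<Sum>k\<in>I. a k * x k + ((\<nu> k)^2 - (\<mu> k)^2) / (2 * (s k)^2)) = Lf x"
      unfolding Lf_def c_def by (simp add: sum.distrib)
    finally show ?thesis .
  qed
  define A where "A = {x \<in> space L. \<epsilon> < Lf x}"
  have A: "A \<in> sets L" unfolding A_def using Lfm by measurable
  have SL: "S \<in> sets L" using S setsL P_def by simp
  have cmp: "c1 * measure P B \<le> c2 * measure Q B"
    if "B \<in> sets L" "c1 \<ge> 0" "c2 \<ge> 0" "\<And>x. x \<in> B \<Longrightarrow> c1 * p x \<le> c2 * q x" for B c1 c2
    by (rule dens_cmp[OF Pd Qd pm pP that p0])
  have cmp': "c1 * measure Q B \<le> c2 * measure P B"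
    if "B \<in> sets L" "c1 \<ge> 0" "c2 \<ge> 0" "\<And>x. x \<in> B \<Longrightarrow> c1 * q x \<le> c2 * p x" for B c1 c2
    by (rule dens_cmp[OF Qd Pd pm(2,1) pP(2,1) that p0(2,1)])
  have i1: "exp \<epsilon> * measure Q (A - S) \<le> 1 * measure P (A - S)"
  proof (rule cmp')
    show "A - S \<in> sets L" using A SL by auto
    fix x assume "x \<in> A - S"
    then have "\<epsilon> < Lf x" by (auto simp: A_def)
    then have "exp \<epsilon> \<le> exp (Lf x)" by simp
    then have "exp \<epsilon> * q x \<le> exp (Lf x) * q x" using p0(2)[of x] by (rule mult_right_mono)
    then show "exp \<epsilon> * q x \<le> 1 * p x" using pq[of x] by (simp add: mult.commute)
  qed auto
  have i2: "1 * measure P (S - A) \<le> exp \<epsilon> * measure Q (S - A)"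
  proof (rule cmp)
    show "S - A \<in> sets L" using A SL by auto
    fix x assume x: "x \<in> S - A"
    then have "x \<in> space L" using SL sets.sets_into_space by blast
    with x have "Lf x \<le> \<epsilon>" by (auto simp: A_def)
    then have "exp (Lf x) \<le> exp \<epsilon>" by simp
    then have "exp (Lf x) * q x \<le> exp \<epsilon> * q x" using p0(2)[of x] by (rule mult_right_mono)
    then show "1 * p x \<le> exp \<epsilon> * q x" using pq[of x] by (simp add: mult.commute)
  qed auto
  interpret PP: prob_space P by (rule pP)
  interpret QQ: prob_space Q by (rule pP)
  have AP: "A \<in> sets P" "S \<in> sets P" "A \<in> sets Q" "S \<in> sets Q" using A SL setsL by auto
  have decP: "measure P S = measure P (S \<inter> A) + measure P (S - A)"
             "measure P A = measure P (S \<inter> A) + measure P (A - S)"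
             "measure Q S = measure Q (S \<inter> A) + measure Q (S - A)"
             "measure Q A = measure Q (S \<inter> A) + measure Q (A - S)"
    using PP.split_meas[of S A] PP.split_meas[of A S] QQ.split_meas[of S A] QQ.split_meas[of A S] AP
    by (simp_all add: Int_commute)
  have main: "measure P S - exp \<epsilon> * measure Q S \<le> measure P A - exp \<epsilon> * measure Q A"
    using decP i1 i2 by (simp add: algebra_simps)
  have V: "(\<Sum>k\<in>I. (a k * s k)^2) = D2"
    unfolding D2_def a_def by (intro sum.cong refl) (use mean_term(3) s in blast)
  have sa: "(\<Sum>k\<in>I. a k * \<mu> k) + c = D2 / 2"
  proof -
    have "(\<Sum>k\<in>I. a k * \<mu> k) + c = (\<Sum>k\<in>I. a k * \<mu> k + ((\<nu> k)^2 - (\<mu> k)^2) / (2 * (s k)^2))"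
      by (simp add: c_def sum.distrib)
    also have "\<dots> = (\<Sum>k\<in>I. ((\<mu> k - \<nu> k) / s k)^2 / 2)"
      unfolding a_def by (intro sum.cong refl) (use mean_term(1) s in blast)
    also have "\<dots> = D2 / 2" by (simp add: D2_def sum_divide_distrib)
    finally show ?thesis .
  qed
  have sb: "(\<Sum>k\<in>I. a k * \<nu> k) + c = - (D2 / 2)"
  proof -
    have "(\<Sum>k\<in>I. a k * \<nu> k) + c = (\<Sum>k\<in>I. a k * \<nu> k + ((\<nu> k)^2 - (\<mu> k)^2) / (2 * (s k)^2))"
      by (simp add: c_def sum.distrib)
    also have "\<dots> = (\<Sum>k\<in>I. - (((\<mu> k - \<nu> k) / s k)^2 / 2))"
      unfolding a_def by (intro sum.cong refl) (use mean_term(2) s in blast)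
    also have "\<dots> = - (D2 / 2)" by (simp add: D2_def sum_divide_distrib sum_negf)
    finally show ?thesis .
  qed
  have AP': "A = {x \<in> space P. \<epsilon> - c < (\<Sum>k\<in>I. a k * x k)}"
            "A = {x \<in> space Q. \<epsilon> - c < (\<Sum>k\<in>I. a k * x k)}"
    unfolding A_def Lf_def spL by auto
  have sD: "sqrt D2 = D" using D2 Dpos by simp
  have mPA: "measure P A = Phi (D / 2 - \<epsilon> / D)"
  proof -
    have "measure P A = Phi (((\<Sum>k\<in>I. a k * \<mu> k) - (\<epsilon> - c)) / sqrt (\<Sum>k\<in>I. (a k * s k)^2))"
      unfolding AP'(1) P_def by (rule gm_halfspace[OF I]) (use V D2(2) s in auto)
    also have "((\<Sum>k\<in>I. a k * \<mu> k) - (\<epsilon> - c)) / sqrt (\<Sum>k\<in>I. (a k * s k)^2) = D / 2 - \<epsilon> / D"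
      using sa V sD D2 Dpos by (simp add: field_simps power2_eq_square)
    finally show ?thesis .
  qed
  have mQA: "measure Q A = Phi (- D / 2 - \<epsilon> / D)"
  proof -
    have "measure Q A = Phi (((\<Sum>k\<in>I. a k * \<nu> k) - (\<epsilon> - c)) / sqrt (\<Sum>k\<in>I. (a k * s k)^2))"
      unfolding AP'(2) Q_def by (rule gm_halfspace[OF I]) (use V D2(2) s in auto)
    also have "((\<Sum>k\<in>I. a k * \<nu> k) - (\<epsilon> - c)) / sqrt (\<Sum>k\<in>I. (a k * s k)^2) = - D / 2 - \<epsilon> / D"
      using sb V sD D2 Dpos by (simp add: field_simps power2_eq_square)
    finally show ?thesis .
  qed
  show ?thesis using main mPA mQA by (simp add: P_def Q_def)
qed



definition gfun :: "real \<Rightarrow> real \<Rightarrow> real" where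
  "gfun \<epsilon> D = Phi (D / 2 - \<epsilon> / D) - exp \<epsilon> * Phi (- D / 2 - \<epsilon> / D)"

lemma gfun_mono:
  assumes D1: "0 < D1" and D12: "D1 \<le> D2"
  shows "gfun \<epsilon> D1 \<le> gfun \<epsilon> D2"
proof -
  define I where "I = {0::nat, 1}"
  define s where "s = (\<lambda>_::nat. 1::real)"
  define h where "h = sqrt (D2^2 - D1^2)"
  define \<mu> where "\<mu> = (\<lambda>k::nat. if k = 0 then D1 else h)"
  define \<nu> where "\<nu> = (\<lambda>_::nat. 0::real)"
  define a where "a = (\<lambda>k::nat. if k = 0 then D1 else 0)"
  define b where "b = \<epsilon> + D1^2 / 2"
  define S where "S = {x \<in> space (gm I \<mu> s). b < (\<Sum>k\<in>I. a k * x k)}"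
  have D2pos: "0 < D2" using D1 D12 by linarith
  have I: "finite I" by (simp add: I_def)
  have s: "\<And>k. k \<in> I \<Longrightarrow> s k > 0" by (simp add: s_def)
  have h2: "h^2 = D2^2 - D1^2" unfolding h_def using D1 D12
    by (simp add: power_mono)
  have Dd: "D2 = sqrt (\<Sum>k\<in>I. ((\<mu> k - \<nu> k) / s k)^2)"
    using h2 D1 D12 by (simp add: I_def \<mu>_def \<nu>_def s_def)
  have V: "(\<Sum>k\<in>I. (a k * s k)^2) = D1^2" by (simp add: I_def a_def s_def)
  have V0: "(\<Sum>k\<in>I. (a k * s k)^2) > 0" using V D1 by simp
  have sq: "sqrt (\<Sum>k\<in>I. (a k * s k)^2) = D1" using V D1 by simp
  have Sm: "S \<in> sets (gm I \<mu> s)"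
  proof -
    have "(\<lambda>x. \<Sum>k\<in>I. a k * x k) \<in> borel_measurable (gm I \<mu> s)"
      unfolding gm_def by measurable
    then show ?thesis unfolding S_def by measurable
  qed
  have SQ: "S = {x \<in> space (gm I \<nu> s). b < (\<Sum>k\<in>I. a k * x k)}"
    unfolding S_def by (simp add: space_gm)
  have mP: "measure (gm I \<mu> s) S = Phi (D1 / 2 - \<epsilon> / D1)"
  proof -
    have "measure (gm I \<mu> s) S = Phi (((\<Sum>k\<in>I. a k * \<mu> k) - b) / sqrt (\<Sum>k\<in>I. (a k * s k)^2))"
      unfolding S_def by (rule gm_halfspace[OF I s V0])
    also have "\<dots> = Phi (D1 / 2 - \<epsilon> / D1)"
      unfolding sq using D1 by (simp add: I_def a_def \<mu>_def b_def field_simps power2_eq_square)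
    finally show ?thesis .
  qed
  have mQ: "measure (gm I \<nu> s) S = Phi (- D1 / 2 - \<epsilon> / D1)"
  proof -
    have "measure (gm I \<nu> s) S = Phi (((\<Sum>k\<in>I. a k * \<nu> k) - b) / sqrt (\<Sum>k\<in>I. (a k * s k)^2))"
      unfolding SQ by (rule gm_halfspace[OF I s V0])
    also have "\<dots> = Phi (- D1 / 2 - \<epsilon> / D1)"
      unfolding sq using D1 by (intro arg_cong[where f=Phi]) (simp add: I_def a_def \<nu>_def b_def field_simps power2_eq_square)
    finally show ?thesis .
  qed
  have "measure (gm I \<mu> s) S - exp \<epsilon> * measure (gm I \<nu> s) S \<le> gfun \<epsilon> D2"
    unfolding gfun_def by (rule hockey[OF I s Dd D2pos Sm])
  then show ?thesis using mP mQ by (simp add: gfun_def)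
qed



definition tri :: "nat \<Rightarrow> (nat \<times> nat) set" where
  "tri d = {(i, j). i \<le> j \<and> j < d}"

lemma tri_finite: "finite (tri d)"
  by (rule finite_subset[of _ "{..<d} \<times> {..<d}"]) (auto simp: tri_def)

lemma tri_Suc: "tri (Suc d) = tri d \<union> (\<lambda>i. (i, d)) ` {..d}"
  by (auto simp: tri_def less_Suc_eq)

lemma sum_tri_Suc: "(\<Sum>p\<in>tri (Suc d). f p) = (\<Sum>p\<in>tri d. f p) + (\<Sum>i\<le>d. f (i, d))"
proof -
  have "(\<Sum>p\<in>tri (Suc d). f p) = (\<Sum>p\<in>tri d. f p) + (\<Sum>p\<in>(\<lambda>i. (i, d)) ` {..d}. f p)"
    unfolding tri_Suc by (rule sum.union_disjoint) (auto simp: tri_finite, auto simp: tri_def)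
  also have "(\<Sum>p\<in>(\<lambda>i. (i, d)) ` {..d}. f p) = (\<Sum>i\<le>d. f (i, d))"
    by (subst sum.reindex) (auto simp: inj_on_def)
  finally show ?thesis .
qed

lemma t2_inner: "(\<Sum>p\<in>tri d. t2 x p * t2 x' p) = (\<Sum>i<d. x i * x' i)^2"
proof (induction d)
  case 0 then show ?case by (simp add: tri_def)
next
  case (Suc d)
  have "(\<Sum>i\<le>d. t2 x (i, d) * t2 x' (i, d)) = (\<Sum>i<d. 2 * (x i * x' i) * (x d * x' d)) + (x d * x' d)^2"
  proof -
    have "(\<Sum>i\<le>d. t2 x (i, d) * t2 x' (i, d)) = (\<Sum>i<d. t2 x (i, d) * t2 x' (i, d)) + t2 x (d, d) * t2 x' (d, d)"
      by (simp add: lessThan_Suc_atMost[symmetric])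
    also have "(\<Sum>i<d. t2 x (i, d) * t2 x' (i, d)) = (\<Sum>i<d. 2 * (x i * x' i) * (x d * x' d))"
    proof (intro sum.cong refl)
      fix i assume "i \<in> {..<d}"
      then have "i \<noteq> d" by auto
      then show "t2 x (i, d) * t2 x' (i, d) = 2 * (x i * x' i) * (x d * x' d)"
        by (simp add: t2_def algebra_simps)
    qed
    also have "t2 x (d, d) * t2 x' (d, d) = (x d * x' d)^2"
      by (simp add: t2_def power_mult_distrib)
    finally show ?thesis .
  qed
  then show ?case
    by (simp add: sum_tri_Suc Suc.IH power2_sum sum_distrib_left sum_distrib_right algebra_simps)
qed

lemma key_ineq:
  fixes a b u c R y :: real
  assumes c: "c > 0" and a: "0 \<le> a" "a \<le> R^2" and b: "0 \<le> b" "b \<le> R^2" and y: "y = 1 \<or> y = -1"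
  shows "a + b - 2 * y * u + c * (a^2 + b^2 - 2 * u^2) \<le> 1 / (2 * c) + 2 * R^2 + 2 * c * R^4"
proof -
  have a2: "a^2 \<le> R^4" using a power_mono[of a "R^2" 2] by (simp add: power_mult[symmetric])
  have b2: "b^2 \<le> R^4" using b power_mono[of b "R^2" 2] by (simp add: power_mult[symmetric])
  have yu: "- 2 * y * u \<le> 2 * \<bar>u\<bar>" using y by auto
  have sq: "0 \<le> (2 * c * \<bar>u\<bar> - 1)^2 / (2 * c)" using c by simp
  have "(2 * c * \<bar>u\<bar> - 1)^2 / (2 * c) = 2 * c * u^2 - 2 * \<bar>u\<bar> + 1 / (2 * c)"
    using c by (simp add: field_simps power2_eq_square)
  with sq have u: "2 * \<bar>u\<bar> - 2 * c * u^2 \<le> 1 / (2 * c)" by linarith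
  have "c * (a^2 + b^2) \<le> c * (2 * R^4)" using a2 b2 c by (intro mult_left_mono) auto
  then show ?thesis using yu u a b by (simp add: algebra_simps)
qed



lemma mech_gm: "mech d \<sigma>1 \<sigma>2 r = gm (out_idx d) (mech_mean r) (\<lambda>k. case k of Inl _ \<Rightarrow> \<sigma>1 | Inr _ \<Rightarrow> \<sigma>2)"
  by (simp add: mech_def gm_def)

lemma out_idx_tri: "out_idx d = Inl ` {..<d} \<union> Inr ` tri d"
  by (simp add: out_idx_def tri_def)

lemma out_idx_finite: "finite (out_idx d)"
  by (simp add: out_idx_tri tri_finite)

lemma sum_out_idx: "(\<Sum>k\<in>out_idx d. F k) = (\<Sum>i<d. F (Inl i)) + (\<Sum>p\<in>tri d. F (Inr p))"
  unfolding out_idx_tri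
  by (subst sum.union_disjoint) (auto simp: tri_finite sum.reindex)

lemma sens_bound:
  fixes x x' :: "nat \<Rightarrow> real" and y y' R \<sigma>1 \<sigma>2 :: real
  assumes "\<sigma>1 > 0" "\<sigma>2 > 0"
    and v: "valid_record d R (x, y)" "valid_record d R (x', y')"
  shows "\<sigma>1^2 * (\<Sum>k\<in>out_idx d. ((mech_mean (x, y) k - mech_mean (x', y') k) / (case k of Inl _ \<Rightarrow> \<sigma>1 | Inr _ \<Rightarrow> \<sigma>2))^2)
     \<le> \<sigma>2\<^sup>2 / (2 * \<sigma>1\<^sup>2) + 2 * R\<^sup>2 + 2 * (\<sigma>1\<^sup>2 / \<sigma>2\<^sup>2) * R ^ 4"
proof -
  define a where "a = (\<Sum>i<d. (x i)^2)"
  define b where "b = (\<Sum>i<d. (x' i)^2)"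
  define u where "u = (\<Sum>i<d. x i * x' i)"
  define c where "c = \<sigma>1^2 / \<sigma>2^2"
  have c: "c > 0" using assms by (simp add: c_def)
  have y: "y = 1 \<or> y = -1" "y' = 1 \<or> y' = -1" using v by (auto simp: valid_record_def)
  have yy: "y * y' = 1 \<or> y * y' = -1" using y by auto
  have a: "0 \<le> a" "a \<le> R^2"
  proof -
    show "0 \<le> a" by (simp add: a_def sum_nonneg)
    have "sqrt a \<le> R" using v by (simp add: valid_record_def a_def)
    then show "a \<le> R^2" using \<open>0 \<le> a\<close> by (metis real_sqrt_le_iff real_sqrt_pow2 power_mono real_sqrt_ge_zero)
  qed
  have b: "0 \<le> b" "b \<le> R^2"
  proof -
    show "0 \<le> b" by (simp add: b_def sum_nonneg)
    have "sqrt b \<le> R" using v by (simp add: valid_record_def b_def)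
    then show "b \<le> R^2" using \<open>0 \<le> b\<close> by (metis real_sqrt_le_iff real_sqrt_pow2 power_mono real_sqrt_ge_zero)
  qed
  have first: "(\<Sum>i<d. (y * x i - y' * x' i)^2) = a + b - 2 * (y * y') * u"
  proof -
    have "(\<Sum>i<d. (y * x i - y' * x' i)^2) = (\<Sum>i<d. y^2 * (x i)^2 + y'^2 * (x' i)^2 - 2 * (y * y') * (x i * x' i))"
      by (intro sum.cong refl) (simp add: power2_eq_square algebra_simps)
    also have "\<dots> = a + b - 2 * (y * y') * u"
      using y by (auto simp: a_def b_def u_def sum.distrib sum_subtractf sum_distrib_left)
    finally show ?thesis .
  qed
  have second: "(\<Sum>p\<in>tri d. (t2 x p - t2 x' p)^2) = a^2 + b^2 - 2 * u^2"
  proof -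
    have "(\<Sum>p\<in>tri d. (t2 x p - t2 x' p)^2) = (\<Sum>p\<in>tri d. t2 x p * t2 x p + t2 x' p * t2 x' p - 2 * (t2 x p * t2 x' p))"
      by (intro sum.cong refl) (simp add: power2_eq_square algebra_simps)
    also have "\<dots> = a^2 + b^2 - 2 * u^2"
      by (simp add: sum.distrib sum_subtractf sum_distrib_left[symmetric] t2_inner a_def b_def u_def power2_eq_square)
    finally show ?thesis .
  qed
  have "(\<Sum>k\<in>out_idx d. ((mech_mean (x, y) k - mech_mean (x', y') k) / (case k of Inl _ \<Rightarrow> \<sigma>1 | Inr _ \<Rightarrow> \<sigma>2))^2)
      = (\<Sum>i<d. (y * x i - y' * x' i)^2) / \<sigma>1^2 + (\<Sum>p\<in>tri d. (t2 x p - t2 x' p)^2) / \<sigma>2^2"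
    by (simp add: sum_out_idx mech_mean_def power_divide sum_divide_distrib)
  also have "\<dots> = (a + b - 2 * (y * y') * u) / \<sigma>1^2 + (a^2 + b^2 - 2 * u^2) / \<sigma>2^2"
    by (simp only: first second)
  finally have eq: "\<sigma>1^2 * (\<Sum>k\<in>out_idx d. ((mech_mean (x, y) k - mech_mean (x', y') k) / (case k of Inl _ \<Rightarrow> \<sigma>1 | Inr _ \<Rightarrow> \<sigma>2))^2)
      = a + b - 2 * (y * y') * u + c * (a^2 + b^2 - 2 * u^2)"
    using assms by (simp add: c_def field_simps)
  have "a + b - 2 * (y * y') * u + c * (a^2 + b^2 - 2 * u^2) \<le> 1 / (2 * c) + 2 * R^2 + 2 * c * R^4"
    by (rule key_ineq[OF c a b yy])
  also have "1 / (2 * c) + 2 * R^2 + 2 * c * R^4 = \<sigma>2\<^sup>2 / (2 * \<sigma>1\<^sup>2) + 2 * R\<^sup>2 + 2 * (\<sigma>1\<^sup>2 / \<sigma>2\<^sup>2) * R ^ 4"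
    by (simp add: c_def)
  finally show ?thesis using eq by simp
qed



theorem lemma1:
  fixes d :: nat and R \<sigma>1 \<sigma>2 \<epsilon> \<delta> \<Delta> :: real
  assumes "d \<ge> 1" and "R > 0" and "\<sigma>1 > 0" and "\<sigma>2 > 0"
    and "\<epsilon> \<ge> 0" and "0 \<le> \<delta>" and "\<delta> \<le> 1"
    and "\<Delta> = sqrt (\<sigma>2\<^sup>2 / (2 * \<sigma>1\<^sup>2) + 2 * R\<^sup>2 + 2 * (\<sigma>1\<^sup>2 / \<sigma>2\<^sup>2) * R ^ 4)"
    and "Phi (\<Delta> / (2 * \<sigma>1) - \<epsilon> * \<sigma>1 / \<Delta>)
           - exp \<epsilon> * Phi (- \<Delta> / (2 * \<sigma>1) - \<epsilon> * \<sigma>1 / \<Delta>) \<le> \<delta>"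
  shows "is_dp (mech d \<sigma>1 \<sigma>2)
           (\<lambda>r r'. valid_record d R r \<and> valid_record d R r') \<epsilon> \<delta>"
proof -
  note s1 = \<open>\<sigma>1 > 0\<close> and s2 = \<open>\<sigma>2 > 0\<close>
  define sf where "sf = (\<lambda>k::nat + nat \<times> nat. case k of Inl _ \<Rightarrow> \<sigma>1 | Inr _ \<Rightarrow> \<sigma>2)"
  have sf: "\<And>k. k \<in> out_idx d \<Longrightarrow> sf k > 0" using s1 s2 by (auto simp: sf_def split: sum.split)
  define E where "E = \<sigma>2\<^sup>2 / (2 * \<sigma>1\<^sup>2) + 2 * R\<^sup>2 + 2 * (\<sigma>1\<^sup>2 / \<sigma>2\<^sup>2) * R ^ 4"
  have Epos: "E > 0" using s1 s2 by (simp add: E_def add_pos_nonneg)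
  have Dl: "\<Delta> = sqrt E" using assms(8) by (simp add: E_def)
  have Dpos: "\<Delta> > 0" using Dl Epos by simp
  have gD: "gfun \<epsilon> (\<Delta> / \<sigma>1) \<le> \<delta>"
  proof -
    have 1: "\<Delta> / \<sigma>1 / 2 - \<epsilon> / (\<Delta> / \<sigma>1) = \<Delta> / (2 * \<sigma>1) - \<epsilon> * \<sigma>1 / \<Delta>"
      using s1 Dpos by (simp add: field_simps)
    have 2: "- (\<Delta> / \<sigma>1) / 2 - \<epsilon> / (\<Delta> / \<sigma>1) = - \<Delta> / (2 * \<sigma>1) - \<epsilon> * \<sigma>1 / \<Delta>"
      using s1 Dpos by (simp add: field_simps)
    show ?thesis unfolding gfun_def 1 2 using assms(9) .
  qed
  show ?thesis unfolding is_dp_def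
  proof (intro allI impI ballI)
    fix r r' S
    assume v: "valid_record d R r \<and> valid_record d R r'" and S: "S \<in> sets (mech d \<sigma>1 \<sigma>2 r)"
    obtain x y where r: "r = (x, y)" by (cases r)
    obtain x' y' where r': "r' = (x', y')" by (cases r')
    define D2 where "D2 = (\<Sum>k\<in>out_idx d. ((mech_mean r k - mech_mean r' k) / sf k)^2)"
    have D20: "D2 \<ge> 0" by (simp add: D2_def sum_nonneg)
    have sb: "\<sigma>1^2 * D2 \<le> E"
      using sens_bound[OF s1 s2, of d R x y x' y'] v unfolding D2_def E_def sf_def r r' by simp
    have Dle: "sqrt D2 \<le> \<Delta> / \<sigma>1"
    proof -
      have "D2 \<le> E / \<sigma>1^2" using sb s1 by (simp add: field_simps)
      then have "sqrt D2 \<le> sqrt (E / \<sigma>1^2)" by simp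
      also have "sqrt (E / \<sigma>1^2) = \<Delta> / \<sigma>1" using s1 Dl by (simp add: real_sqrt_divide)
      finally show ?thesis .
    qed
    have P: "mech d \<sigma>1 \<sigma>2 r = gm (out_idx d) (mech_mean r) sf" "mech d \<sigma>1 \<sigma>2 r' = gm (out_idx d) (mech_mean r') sf"
      by (simp_all add: mech_gm sf_def)
    show "measure (mech d \<sigma>1 \<sigma>2 r) S \<le> exp \<epsilon> * measure (mech d \<sigma>1 \<sigma>2 r') S + \<delta>"
    proof (cases "D2 = 0")
      case True
      have "\<forall>k\<in>out_idx d. ((mech_mean r k - mech_mean r' k) / sf k)^2 = 0"
        using True unfolding D2_def by (subst (asm) sum_nonneg_eq_0_iff) (auto simp: out_idx_finite)
      then have "\<forall>k\<in>out_idx d. mech_mean r k = mech_mean r' k" using sf by force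
      then have "mech d \<sigma>1 \<sigma>2 r = mech d \<sigma>1 \<sigma>2 r'"
        unfolding P gm_def by (intro PiM_cong refl) auto
      moreover have "measure (mech d \<sigma>1 \<sigma>2 r') S \<le> exp \<epsilon> * measure (mech d \<sigma>1 \<sigma>2 r') S"
        using \<open>\<epsilon> \<ge> 0\<close> by (intro mult_right_mono[of 1 "exp \<epsilon>", simplified]) auto
      ultimately show ?thesis using \<open>0 \<le> \<delta>\<close> by simp
    next
      case False
      then have Dp: "sqrt D2 > 0" using D20 by simp
      have "measure (mech d \<sigma>1 \<sigma>2 r) S - exp \<epsilon> * measure (mech d \<sigma>1 \<sigma>2 r') S \<le> gfun \<epsilon> (sqrt D2)"
        unfolding P gfun_def
        by (rule hockey[OF out_idx_finite sf _ Dp]) (use S P in \<open>simp_all add: D2_def\<close>)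
      also have "\<dots> \<le> gfun \<epsilon> (\<Delta> / \<sigma>1)" by (rule gfun_mono[OF Dp Dle])
      finally show ?thesis using gD by simp
    qed
  qed
qed


end
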